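(* Let $L$ be a regular language over a nonempty finite alphabet $A$ with minimal automaton $\mathcal{A}_L$. Then $\mu(L)=1$ if and only if $\mathcal{A}_L$ is a zero automaton whose (unique) sink state is final, and $\mu(L)=0$ if and only if $\mathcal{A}_L$ is a zero automaton whose sink state is non-final.
   Context: Automata are complete, deterministic, finite and accessible, $\langle Q,A,\cdot,q_0,F\rangle$. $\mu(L)=\lim_{n\to\infty}|L\cap A^n|/|A|^n$ when the limit exists. A sink state $q$ satisfies $q\cdot a=q$ for all $a\in A$. A zero automaton is an automaton that has a sink state and a synchronising word $w$ (a word such that $p\cdot w$ is the same state for all $p\in Q$). *)

theory Defs
  imports Complex_Main
begin

definition words :: "'a set \<Rightarrow> nat \<Rightarrow> 'a list set" where
  "words A n = {w. set w \<subseteq> A \<and> length w = n}"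

definition has_density :: "'a set \<Rightarrow> 'a list set \<Rightarrow> real \<Rightarrow> bool" where
  "has_density A L d \<longleftrightarrow>
     (\<lambda>n. real (card (L \<inter> words A n)) / real (card A ^ n)) \<longlonglongrightarrow> d"

definition dstar :: "('s \<Rightarrow> 'a \<Rightarrow> 's) \<Rightarrow> 's \<Rightarrow> 'a list \<Rightarrow> 's" where
  "dstar \<delta> q w = foldl \<delta> q w"

definition dfa :: "'a set \<Rightarrow> 's set \<Rightarrow> ('s \<Rightarrow> 'a \<Rightarrow> 's) \<Rightarrow> 's \<Rightarrow> 's set \<Rightarrow> bool" where
  "dfa A Q \<delta> q0 F \<longleftrightarrow> finite Q \<and> q0 \<in> Q \<and> F \<subseteq> Q
     \<and> (\<forall>q\<in>Q. \<forall>a\<in>A. \<delta> q a \<in> Q)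
     \<and> (\<forall>q\<in>Q. \<exists>w. set w \<subseteq> A \<and> dstar \<delta> q0 w = q)"

definition dfa_lang :: "'a set \<Rightarrow> ('s \<Rightarrow> 'a \<Rightarrow> 's) \<Rightarrow> 's \<Rightarrow> 's set \<Rightarrow> 'a list set" where
  "dfa_lang A \<delta> q0 F = {w. set w \<subseteq> A \<and> dstar \<delta> q0 w \<in> F}"

definition regular :: "'a set \<Rightarrow> 'a list set \<Rightarrow> bool" where
  "regular A L \<longleftrightarrow> (\<exists>(Q::nat set) \<delta> q0 F. dfa A Q \<delta> q0 F \<and> dfa_lang A \<delta> q0 F = L)"

definition is_sink :: "'a set \<Rightarrow> ('s \<Rightarrow> 'a \<Rightarrow> 's) \<Rightarrow> 's \<Rightarrow> bool" where
  "is_sink A \<delta> q \<longleftrightarrow> (\<forall>a\<in>A. \<delta> q a = q)"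

definition synchronising :: "'a set \<Rightarrow> 's set \<Rightarrow> ('s \<Rightarrow> 'a \<Rightarrow> 's) \<Rightarrow> 'a list \<Rightarrow> bool" where
  "synchronising A Q \<delta> w \<longleftrightarrow> set w \<subseteq> A \<and> (\<forall>p\<in>Q. \<forall>q\<in>Q. dstar \<delta> p w = dstar \<delta> q w)"

definition zero_automaton :: "'a set \<Rightarrow> 's set \<Rightarrow> ('s \<Rightarrow> 'a \<Rightarrow> 's) \<Rightarrow> bool" where
  "zero_automaton A Q \<delta> \<longleftrightarrow> (\<exists>z\<in>Q. is_sink A \<delta> z) \<and> (\<exists>w. synchronising A Q \<delta> w)"

text \<open>Minimal automaton of L: the automaton of left quotients
  u^-1 L = {w. u @ w \<in> L}, with initial state L and final states those containing
  the empty word.\<close>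
definition lquot :: "'a list \<Rightarrow> 'a list set \<Rightarrow> 'a list set" where
  "lquot u L = {w. u @ w \<in> L}"

definition min_states :: "'a set \<Rightarrow> 'a list set \<Rightarrow> 'a list set set" where
  "min_states A L = {lquot u L | u. set u \<subseteq> A}"

definition min_delta :: "'a list set \<Rightarrow> 'a \<Rightarrow> 'a list set" where
  "min_delta X a = {w. a # w \<in> X}"

definition min_init :: "'a list set \<Rightarrow> 'a list set" where
  "min_init L = L"

definition min_final :: "'a set \<Rightarrow> 'a list set \<Rightarrow> 'a list set set" where
  "min_final A L = {X \<in> min_states A L. [] \<in> X}"

end

theory Submission
  imports Defs
begin

lemma lquot_Nil[simp]: "lquot [] X = X" by (simp add: lquot_def)
lemma lquot_append: "lquot (u @ v) X = lquot v (lquot u X)" by (simp add: lquot_def)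
lemma lquot_Cons: "lquot (a # v) X = lquot v (lquot [a] X)"
  using lquot_append[of "[a]" v X] by simp
lemma min_delta_lquot: "min_delta X a = lquot [a] X" by (simp add: min_delta_def lquot_def)
lemma dstar_min: "dstar min_delta X v = lquot v X"
  unfolding dstar_def
proof (induction v arbitrary: X)
  case Nil then show ?case by simp
next
  case (Cons a v) then show ?case by (simp add: min_delta_lquot lquot_Cons[of a v X])
qed

lemma words_finite: "finite A \<Longrightarrow> finite (words A n)"
  unfolding words_def using finite_lists_length_eq by blast
lemma card_words: "finite A \<Longrightarrow> card (words A n) = card A ^ n"
  unfolding words_def by (rule card_lists_length_eq)
lemma split_words: "X \<inter> words A (Suc n) = (\<Union>a\<in>A. (#) a ` (lquot [a] X \<inter> words A n))"
  by (auto simp: words_def lquot_def length_Suc_conv)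

lemma card_split: assumes "finite A"
  shows "card (X \<inter> words A (Suc n)) = (\<Sum>a\<in>A. card (lquot [a] X \<inter> words A n))"
proof -
  have "card (X \<inter> words A (Suc n)) = card (\<Union>a\<in>A. (#) a ` (lquot [a] X \<inter> words A n))"
    by (simp only: split_words)
  also have "... = (\<Sum>a\<in>A. card ((#) a ` (lquot [a] X \<inter> words A n)))"
    by (rule card_UN_disjoint) (auto simp: assms words_finite)
  also have "... = (\<Sum>a\<in>A. card (lquot [a] X \<inter> words A n))"
    by (intro sum.cong refl card_image) (auto simp: inj_on_def)
  finally show ?thesis .
qed

definition fr :: "'a set \<Rightarrow> nat \<Rightarrow> 'a list set \<Rightarrow> real" where
  "fr A n X = real (card (X \<inter> words A n)) / real (card A ^ n)"

lemma fr_rec: assumes "finite A" "A \<noteq> {}"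
  shows "fr A (Suc n) X = (\<Sum>a\<in>A. fr A n (lquot [a] X)) / real (card A)"
proof -
  have N: "real (card A) > 0" using assms by (simp add: card_gt_0_iff)
  show ?thesis
    unfolding fr_def using N
    by (simp add: card_split[OF assms(1)] sum_divide_distrib[symmetric] field_simps)
qed

lemma fr_nonneg: "0 \<le> fr A n X" by (simp add: fr_def)
lemma fr_le1: assumes "finite A" "A \<noteq> {}" shows "fr A n X \<le> 1"
proof -
  have "card (X \<inter> words A n) \<le> card (words A n)"
    by (intro card_mono words_finite assms) auto
  moreover have "card A ^ n > 0" using assms by (simp add: card_gt_0_iff)
  ultimately show ?thesis using assms by (simp add: fr_def card_words)
qed
lemma fr_all: assumes "finite A" "A \<noteq> {}" shows "fr A n {w. set w \<subseteq> A} = 1"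
proof -
  have "{w. set w \<subseteq> A} \<inter> words A n = words A n" by (auto simp: words_def)
  moreover have "card A ^ n > 0" using assms by (simp add: card_gt_0_iff)
  ultimately show ?thesis using assms by (simp add: fr_def card_words)
qed
lemma fr_empty: "fr A n {} = 0" by (simp add: fr_def)
lemma fr_0: "fr A 0 X = (if [] \<in> X then 1 else 0)"
proof -
  have "words A 0 = {[]}" by (auto simp: words_def)
  then show ?thesis by (auto simp: fr_def)
qed

lemma sink_words: "is_sink A min_delta z \<Longrightarrow> set v \<subseteq> A \<Longrightarrow> lquot v z = z"
proof (induction v)
  case Nil then show ?case by simp
next
  case (Cons a v) then show ?case
    by (simp add: lquot_Cons[of a v z] is_sink_def min_delta_lquot[symmetric])
qed

lemma finite_min_states:
  assumes "regular A L" shows "finite (min_states A L)"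
proof -
  obtain Q :: "nat set" and \<delta> q0 F where d: "dfa A Q \<delta> q0 F" and L: "dfa_lang A \<delta> q0 F = L"
    using assms unfolding regular_def by blast
  let ?f = "\<lambda>q. {w. set w \<subseteq> A \<and> dstar \<delta> q w \<in> F}"
  have inQ: "set u \<subseteq> A \<Longrightarrow> q \<in> Q \<Longrightarrow> dstar \<delta> q u \<in> Q" for u q
    using d unfolding dfa_def dstar_def by (induction u arbitrary: q) auto
  have "min_states A L \<subseteq> ?f ` Q"
  proof
    fix X assume "X \<in> min_states A L"
    then obtain u where u: "set u \<subseteq> A" "X = lquot u L" by (auto simp: min_states_def)
    have "X = ?f (dstar \<delta> q0 u)" using u L by (auto simp: lquot_def dfa_lang_def dstar_def)
    moreover have "dstar \<delta> q0 u \<in> Q" using inQ u d by (auto simp: dfa_def)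
    ultimately show "X \<in> ?f ` Q" by blast
  qed
  moreover have "finite Q" using d by (simp add: dfa_def)
  ultimately show ?thesis using finite_subset by blast
qed

lemma sync_exists:
  assumes "finite F" "F \<subseteq> S" and cl: "\<And>X v. X \<in> S \<Longrightarrow> set v \<subseteq> A \<Longrightarrow> lquot v X \<in> S"
   and reach: "\<And>X. X \<in> S \<Longrightarrow> \<exists>v. set v \<subseteq> A \<and> lquot v X = T"
   and Tsink: "\<And>v. set v \<subseteq> A \<Longrightarrow> lquot v T = T"
  shows "\<exists>w. set w \<subseteq> A \<and> (\<forall>X\<in>F. lquot w X = T)"
using assms(1,2) proof (induction F rule: finite_induct)
  case empty show ?case by (intro exI[of _ "[]"]) simp
next
  case (insert X F)
  then obtain w where w: "set w \<subseteq> A" "\<forall>Y\<in>F. lquot w Y = T" by auto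
  have "lquot w X \<in> S" using insert.prems cl w(1) by auto
  then obtain v where v: "set v \<subseteq> A" "lquot v (lquot w X) = T" using reach by blast
  show ?case using w v Tsink by (intro exI[of _ "w @ v"]) (auto simp: lquot_append)
qed


locale dens =
  fixes A :: "'a set" and g :: "nat \<Rightarrow> 'a list set \<Rightarrow> real"
  assumes finA: "finite A" and neA: "A \<noteq> {}"
    and rec: "\<And>n X. g (Suc n) X = (\<Sum>a\<in>A. g n (lquot [a] X)) / real (card A)"
    and nonneg: "\<And>n X. 0 \<le> g n X" and le1: "\<And>n X. g n X \<le> 1"
begin

abbreviation N where "N \<equiv> real (card A)"
lemma N_ge1: "N \<ge> 1" using finA neA by (simp add: Suc_leI card_gt_0_iff)

lemma step_ge: assumes a: "a \<in> A" shows "g n (lquot [a] X) \<le> N * g (Suc n) X"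
proof -
  have "g n (lquot [a] X) \<le> (\<Sum>b\<in>A. g n (lquot [b] X))"
    using a finA by (intro member_le_sum) (auto intro: nonneg)
  also have "... = N * g (Suc n) X" using rec[of n X] N_ge1 by simp
  finally show ?thesis .
qed

lemma quot_tendsto: assumes "(\<lambda>n. g n X) \<longlonglongrightarrow> 0" "set v \<subseteq> A"
  shows "(\<lambda>n. g n (lquot v X)) \<longlonglongrightarrow> 0"
  using assms proof (induction v arbitrary: X)
  case Nil thus ?case by simp
next
  case (Cons a v)
  have "(\<lambda>n. g n (lquot [a] X)) \<longlonglongrightarrow> 0"
  proof (rule tendsto_sandwich[where f="\<lambda>_. 0" and h="\<lambda>n. N * g (Suc n) X"])
    show "eventually (\<lambda>n. 0 \<le> g n (lquot [a] X)) sequentially" by (simp add: nonneg)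
    show "eventually (\<lambda>n. g n (lquot [a] X) \<le> N * g (Suc n) X) sequentially"
      using Cons.prems step_ge by auto
    show "(\<lambda>n. 0) \<longlonglongrightarrow> (0::real)" by simp
    have "(\<lambda>n. g (Suc n) X) \<longlonglongrightarrow> 0" using Cons.prems(1) by (rule LIMSEQ_Suc)
    then show "(\<lambda>n. N * g (Suc n) X) \<longlonglongrightarrow> 0" using tendsto_mult_right_zero by blast
  qed
  then show ?case using Cons by (simp add: lquot_Cons[of a v X])
qed

lemma B: "set v \<subseteq> A \<Longrightarrow> g 0 (lquot v X) \<le> N ^ length v * g (length v) X"
proof (induction v arbitrary: X)
  case Nil then show ?case by simp
next
  case (Cons a v)
  have "g 0 (lquot (a # v) X) = g 0 (lquot v (lquot [a] X))" by (simp add: lquot_Cons[of a v X])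
  also have "... \<le> N ^ length v * g (length v) (lquot [a] X)" using Cons by simp
  also have "... \<le> N ^ length v * (N * g (Suc (length v)) X)"
    using Cons.prems step_ge N_ge1 by (intro mult_left_mono) auto
  finally show ?case by (simp add: mult.assoc mult.left_commute)
qed

lemma closed_contra:
  assumes C: "finite C" "C \<noteq> {}" "\<And>X a. X \<in> C \<Longrightarrow> a \<in> A \<Longrightarrow> lquot [a] X \<in> C"
    and bad: "\<And>X. X \<in> C \<Longrightarrow> \<exists>v. set v \<subseteq> A \<and> g 0 (lquot v X) = 1"
    and lim: "\<And>X. X \<in> C \<Longrightarrow> (\<lambda>n. g n X) \<longlonglongrightarrow> 0"
  shows False
proof -
  obtain f where f: "\<And>X. X \<in> C \<Longrightarrow> set (f X) \<subseteq> A \<and> g 0 (lquot (f X) X) = 1"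
    using bad by metis
  define K where "K = Suc (Max (length ` f ` C))"
  have lenK: "length (f X) < K" if "X \<in> C" for X
    using that C(1) unfolding K_def by (simp add: le_imp_less_Suc)
  define s where "s n X = (\<Sum>j<K. g (n + j) X)" for n X
  define d where "d = 1 / N ^ K"
  have dpos: "d > 0" using N_ge1 by (simp add: d_def)
  have base: "d \<le> s 0 X" if "X \<in> C" for X
  proof -
    let ?l = "length (f X)"
    have "1 \<le> N ^ ?l * g ?l X" using B[of "f X" X] f[OF that] by simp
    hence "1 / N ^ ?l \<le> g ?l X" using N_ge1 by (simp add: field_simps)
    moreover have "d \<le> 1 / N ^ ?l" unfolding d_def using N_ge1 lenK[OF that]
      by (intro divide_left_mono power_increasing) auto
    moreover have "g ?l X \<le> (\<Sum>j<K. g j X)" using lenK[OF that]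
      by (intro member_le_sum) (auto intro: nonneg)
    moreover have "s 0 X = (\<Sum>j<K. g j X)" by (simp add: s_def)
    ultimately show ?thesis by linarith
  qed
  have srec: "s (Suc n) X = (\<Sum>a\<in>A. s n (lquot [a] X)) / N" for n X
  proof -
    have "s (Suc n) X = (\<Sum>j<K. (\<Sum>a\<in>A. g (n + j) (lquot [a] X)) / N)"
      unfolding s_def by (simp add: rec)
    also have "... = (\<Sum>j<K. \<Sum>a\<in>A. g (n + j) (lquot [a] X)) / N"
      by (simp add: sum_divide_distrib)
    also have "... = (\<Sum>a\<in>A. s n (lquot [a] X)) / N"
      unfolding s_def by (subst sum.swap) simp
    finally show ?thesis .
  qed
  have lower: "\<forall>X\<in>C. d \<le> s n X" for n
  proof (induction n)
    case 0 then show ?case using base by auto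
  next
    case (Suc n)
    show ?case
    proof
      fix X assume X: "X \<in> C"
      have "(\<Sum>a\<in>A. d) \<le> (\<Sum>a\<in>A. s n (lquot [a] X))"
        using Suc X C(3) by (intro sum_mono) auto
      hence "N * d \<le> (\<Sum>a\<in>A. s n (lquot [a] X))" by simp
      hence "d \<le> (\<Sum>a\<in>A. s n (lquot [a] X)) / N" using N_ge1 by (simp add: field_simps)
      then show "d \<le> s (Suc n) X" by (simp add: srec)
    qed
  qed
  obtain X0 where X0: "X0 \<in> C" using C(2) by blast
  have "(\<lambda>n. s n X0) \<longlonglongrightarrow> 0"
    unfolding s_def
  proof (rule tendsto_null_sum)
    fix j show "(\<lambda>n. g (n + j) X0) \<longlonglongrightarrow> 0"
      using LIMSEQ_ignore_initial_segment[OF lim[OF X0], of j] by simp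
  qed
  moreover have "\<forall>n\<ge>0. d \<le> s n X0" using lower X0 by auto
  ultimately have "d \<le> 0" by (intro LIMSEQ_le_const) auto
  with dpos show False by simp
qed

end

context dens begin

lemma reach_target:
  assumes S: "finite S" and clS: "\<And>X v. X \<in> S \<Longrightarrow> set v \<subseteq> A \<Longrightarrow> lquot v X \<in> S"
   and lim: "\<And>X. X \<in> S \<Longrightarrow> (\<lambda>n. g n X) \<longlonglongrightarrow> 0"
   and badT: "\<And>Y. Y \<in> S \<Longrightarrow> Y \<noteq> T \<Longrightarrow> \<exists>v. set v \<subseteq> A \<and> g 0 (lquot v Y) = 1"
   and X: "X \<in> S"
  shows "\<exists>v. set v \<subseteq> A \<and> lquot v X = T"
proof (rule ccontr)
  assume nr: "\<not> ?thesis"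
  define C where "C = {lquot v X | v. set v \<subseteq> A}"
  have CS: "C \<subseteq> S" using clS X by (auto simp: C_def)
  show False
  proof (rule closed_contra[of C])
    show "finite C" using CS S finite_subset by blast
    show "C \<noteq> {}" unfolding C_def by (auto intro: exI[of _ "[]"])
    show "lquot [a] Y \<in> C" if "Y \<in> C" "a \<in> A" for Y a
    proof -
      obtain v where v: "set v \<subseteq> A" "Y = lquot v X" using \<open>Y \<in> C\<close> by (auto simp: C_def)
      then have "lquot [a] Y = lquot (v @ [a]) X" by (simp add: lquot_append)
      moreover have "set (v @ [a]) \<subseteq> A" using v that by simp
      ultimately show ?thesis unfolding C_def by blast
    qed
    show "\<exists>v. set v \<subseteq> A \<and> g 0 (lquot v Y) = 1" if "Y \<in> C" for Y
      using that nr CS badT by (auto simp: C_def)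
    show "(\<lambda>n. g n Y) \<longlonglongrightarrow> 0" if "Y \<in> C" for Y using that CS lim by auto
  qed
qed

lemma P_bound:
  assumes clS: "\<And>X a. X \<in> S \<Longrightarrow> a \<in> A \<Longrightarrow> lquot [a] X \<in> S"
    and H: "\<And>Y n'. Y \<in> S \<Longrightarrow> n' \<ge> n \<Longrightarrow> g n' Y \<le> Bd" and Bd: "0 \<le> Bd"
  shows "Y \<in> S \<Longrightarrow> set u \<subseteq> A \<Longrightarrow>
     g (n + length u) Y \<le> (1 - 1 / N ^ length u) * Bd + g n (lquot u Y) / N ^ length u"
proof (induction u arbitrary: Y)
  case Nil then show ?case by simp
next
  case (Cons a u)
  let ?p = "1 / N ^ length u" and ?q = "g n (lquot u (lquot [a] Y)) / N ^ length u"
  have aA: "a \<in> A" using Cons.prems by simp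
  have Ya: "lquot [a] Y \<in> S" using clS Cons.prems by simp
  have IH: "g (n + length u) (lquot [a] Y) \<le> (1 - ?p) * Bd + ?q"
    using Cons.IH[OF Ya] Cons.prems by simp
  have rest: "(\<Sum>b\<in>A - {a}. g (n + length u) (lquot [b] Y)) \<le> (\<Sum>b\<in>A - {a}. Bd)"
    using Cons.prems clS by (intro sum_mono H) auto
  have cardr: "real (card (A - {a})) = N - 1" proof -
    have "card A \<ge> 1" using aA finA card_gt_0_iff by (metis One_nat_def Suc_leI empty_iff)
    then show ?thesis using aA finA by (simp add: of_nat_diff)
  qed
  have "(\<Sum>b\<in>A. g (n + length u) (lquot [b] Y)) =
        g (n + length u) (lquot [a] Y) + (\<Sum>b\<in>A - {a}. g (n + length u) (lquot [b] Y))"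
    using aA finA by (simp add: sum.remove)
  also have "... \<le> (1 - ?p) * Bd + ?q + (N - 1) * Bd" using IH rest cardr by simp
  finally have S1: "(\<Sum>b\<in>A. g (n + length u) (lquot [b] Y)) \<le> (1 - ?p) * Bd + ?q + (N - 1) * Bd" .
  have "g (n + length (a # u)) Y = (\<Sum>b\<in>A. g (n + length u) (lquot [b] Y)) / N"
    by (simp add: rec)
  also have "... \<le> ((1 - ?p) * Bd + ?q + (N - 1) * Bd) / N"
    using S1 N_ge1 by (intro divide_right_mono) auto
  also have "... = (1 - 1 / N ^ length (a # u)) * Bd + g n (lquot (a # u) Y) / N ^ length (a # u)"
    using N_ge1 by (simp add: lquot_Cons[of a u Y] field_simps)
  finally show ?case .
qed

lemma conv_from_sync:
  assumes clS: "\<And>X a. X \<in> S \<Longrightarrow> a \<in> A \<Longrightarrow> lquot [a] X \<in> S"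
   and zero: "\<And>n. g n z = 0"
   and w: "set w \<subseteq> A" and sync: "\<And>X. X \<in> S \<Longrightarrow> lquot w X = z"
   and X: "X \<in> S"
  shows "(\<lambda>n. g n X) \<longlonglongrightarrow> 0"
proof -
  obtain a0 where a0: "a0 \<in> A" using neA by blast
  define w' where "w' = a0 # w"
  define k where "k = length w'"
  have kpos: "k > 0" by (simp add: k_def w'_def)
  have w'A: "set w' \<subseteq> A" using a0 w by (simp add: w'_def)
  have sync': "lquot w' Y = z" if "Y \<in> S" for Y
    using sync clS that a0 by (simp add: w'_def lquot_Cons[of a0 w Y])
  define c where "c = 1 - 1 / N ^ k"
  have c0: "0 \<le> c" and c1: "c < 1" using N_ge1 by (auto simp: c_def)
  have bound: "\<forall>Y\<in>S. \<forall>n'\<ge>m * k. g n' Y \<le> c ^ m" for m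
  proof (induction m)
    case 0 then show ?case using le1 by simp
  next
    case (Suc m)
    show ?case
    proof (intro ballI allI impI)
      fix Y n' assume Y: "Y \<in> S" and n': "Suc m * k \<le> n'"
      define n where "n = n' - k"
      have nn: "n' = n + length w'" "n \<ge> m * k" using n' by (auto simp: n_def k_def)
      have "g n' Y \<le> (1 - 1 / N ^ length w') * c ^ m + g n (lquot w' Y) / N ^ length w'"
        unfolding nn(1)
        by (rule P_bound[OF clS _ _ Y w'A]) (use Suc nn(2) c0 in auto)
      also have "... = c ^ Suc m" using sync'[OF Y] zero by (simp add: c_def k_def)
      finally show "g n' Y \<le> c ^ Suc m" .
    qed
  qed
  show ?thesis
    unfolding LIMSEQ_iff
  proof (intro allI impI)
    fix r :: real assume r: "r > 0"
    have "(\<lambda>m. c ^ m) \<longlonglongrightarrow> 0" using c0 c1 by (intro LIMSEQ_power_zero) auto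
    then obtain m0 where "\<forall>m\<ge>m0. norm (c ^ m - 0) < r" using r unfolding LIMSEQ_iff by blast
    then have m0: "c ^ m0 < r" using c0 by auto
    show "\<exists>no. \<forall>n\<ge>no. norm (g n X - 0) < r"
    proof (intro exI allI impI)
      fix n assume "m0 * k \<le> n"
      then have "g n X \<le> c ^ m0" using bound X by blast
      then show "norm (g n X - 0) < r" using m0 nonneg[of n X] by simp
    qed
  qed
qed

end

context dens begin

lemma main_iff:
  assumes LA: "L \<subseteq> {w. set w \<subseteq> A}" and fin: "finite (min_states A L)"
    and Tsink: "\<And>a. a \<in> A \<Longrightarrow> lquot [a] T = T"
    and Tzero: "\<And>n. g n T = 0"
    and badT: "\<And>Y. Y \<subseteq> {w. set w \<subseteq> A} \<Longrightarrow> Y \<noteq> T \<Longrightarrow> \<exists>v. set v \<subseteq> A \<and> g 0 (lquot v Y) = 1"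
    and Tchar: "\<And>z. z \<subseteq> {w. set w \<subseteq> A} \<Longrightarrow> is_sink A min_delta z \<Longrightarrow> P z \<longleftrightarrow> z = T"
  shows "(\<lambda>n. g n L) \<longlonglongrightarrow> 0 \<longleftrightarrow>
     zero_automaton A (min_states A L) min_delta \<and> (\<exists>z\<in>min_states A L. is_sink A min_delta z \<and> P z)"
proof -
  let ?S = "min_states A L"
  have memS: "X \<in> ?S \<longleftrightarrow> (\<exists>u. set u \<subseteq> A \<and> X = lquot u L)" for X
    unfolding min_states_def by (simp only: mem_Collect_eq conj_commute)
  have clS: "lquot v X \<in> ?S" if XS: "X \<in> ?S" and vA: "set v \<subseteq> A" for X v
  proof -
    obtain u where "set u \<subseteq> A" "X = lquot u L" using XS memS[of X] by auto
    then have "lquot v X = lquot (u @ v) L" by (simp add: lquot_append)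
    moreover have "set (u @ v) \<subseteq> A" using \<open>set u \<subseteq> A\<close> vA by simp
    ultimately show ?thesis using memS[of "lquot v X"] by blast
  qed
  have clS1: "lquot [a] X \<in> ?S" if "X \<in> ?S" "a \<in> A" for X a using clS[of X "[a]"] that by simp
  have LS: "L \<in> ?S" using memS[of L] by (auto intro: exI[of _ "[]"])
  have subS: "X \<subseteq> {w. set w \<subseteq> A}" if XS: "X \<in> ?S" for X
  proof
    fix x assume "x \<in> X"
    obtain u where "X = lquot u L" using XS memS[of X] by auto
    then have "u @ x \<in> L" using \<open>x \<in> X\<close> by (simp add: lquot_def)
    then have "set (u @ x) \<subseteq> A" using LA by blast
    then show "x \<in> {w. set w \<subseteq> A}" by simp
  qed
  have Tsink_w: "lquot v T = T" if "set v \<subseteq> A" for v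
    using that proof (induction v)
    case (Cons a v) then show ?case using Tsink by (simp add: lquot_Cons[of a v T])
  qed simp
  have Tis: "is_sink A min_delta T" using Tsink by (simp add: is_sink_def min_delta_lquot)
  show ?thesis
  proof
    assume lim: "(\<lambda>n. g n L) \<longlonglongrightarrow> 0"
    have limS: "(\<lambda>n. g n X) \<longlonglongrightarrow> 0" if XS: "X \<in> ?S" for X
    proof -
      obtain u where "set u \<subseteq> A" "X = lquot u L" using XS memS[of X] by auto
      then show ?thesis using quot_tendsto[OF lim] by simp
    qed
    have reach: "\<exists>v. set v \<subseteq> A \<and> lquot v X = T" if XS: "X \<in> ?S" for X
      by (rule reach_target[OF fin clS limS _ XS]) (use badT subS in auto)
    have TS: "T \<in> ?S" using reach[OF LS] clS LS by blast
    obtain w where w: "set w \<subseteq> A" "\<forall>X\<in>?S. lquot w X = T"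
      using sync_exists[OF fin order.refl clS reach Tsink_w] by blast
    have "zero_automaton A ?S min_delta"
      unfolding zero_automaton_def synchronising_def using TS Tis w
      by (auto simp: dstar_min)
    moreover have "P T" using Tchar[OF subS[OF TS] Tis] by simp
    ultimately show "zero_automaton A ?S min_delta \<and> (\<exists>z\<in>?S. is_sink A min_delta z \<and> P z)"
      using TS Tis by blast
  next
    assume "zero_automaton A ?S min_delta \<and> (\<exists>z\<in>?S. is_sink A min_delta z \<and> P z)"
    then obtain w z where w: "synchronising A ?S min_delta w" and z: "z \<in> ?S" "is_sink A min_delta z" "P z"
      unfolding zero_automaton_def by blast
    have zT: "z = T" using Tchar[OF subS[OF z(1)] z(2)] z(3) by simp
    have wA: "set w \<subseteq> A" using w by (simp add: synchronising_def)
    have sync: "lquot w X = T" if "X \<in> ?S" for X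
    proof -
      have ws: "\<forall>p\<in>?S. \<forall>q\<in>?S. lquot w p = lquot w q"
        using w unfolding synchronising_def dstar_min by blast
      have "lquot w X = lquot w z" using ws that z(1) by blast
      also have "... = z" using sink_words[OF z(2) wA] .
      finally show ?thesis using zT by simp
    qed
    show "(\<lambda>n. g n L) \<longlonglongrightarrow> 0"
      by (rule conv_from_sync[OF clS1 Tzero wA sync LS])
  qed
qed

end

theorem mainTheorem2:
  fixes A :: "'a set" and L :: "'a list set"
  assumes "finite A" and "A \<noteq> {}"
    and "L \<subseteq> {w. set w \<subseteq> A}"
    and "regular A L"
  shows "(has_density A L 1 \<longleftrightarrow>
            zero_automaton A (min_states A L) min_delta \<and>
            (\<exists>z\<in>min_states A L. is_sink A min_delta z \<and> z \<in> min_final A L))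
       \<and> (has_density A L 0 \<longleftrightarrow>
            zero_automaton A (min_states A L) min_delta \<and>
            (\<exists>z\<in>min_states A L. is_sink A min_delta z \<and> z \<notin> min_final A L))"
proof -
  note fA = assms(1) and neA = assms(2)
  have fin: "finite (min_states A L)" using finite_min_states[OF assms(4)] .
  have N: "real (card A) > 0" using fA neA by (simp add: card_gt_0_iff)
  have hd: "has_density A L d \<longleftrightarrow> (\<lambda>n. fr A n L) \<longlonglongrightarrow> d" for d
    by (simp add: has_density_def fr_def)
  have fin_iff: "z \<in> min_final A L \<longleftrightarrow> [] \<in> z" if "z \<in> min_states A L" for z
    using that by (simp add: min_final_def)
  interpret d1: dens A "\<lambda>n X. 1 - fr A n X"
  proof
    show "1 - fr A (Suc n) X = (\<Sum>a\<in>A. 1 - fr A n (lquot [a] X)) / real (card A)" for n X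
      using N by (simp add: fr_rec[OF fA neA] sum_subtractf diff_divide_distrib)
  qed (auto simp: fA neA fr_le1[OF fA neA] fr_nonneg)
  interpret d0: dens A "fr A"
    by standard (simp_all add: fA neA fr_le1[OF fA neA] fr_nonneg fr_rec[OF fA neA])
  have sinkA: "lquot [a] {w. set w \<subseteq> A} = {w. set w \<subseteq> A}" if "a \<in> A" for a
    using that by (auto simp: lquot_def)
  have r1: "(\<lambda>n. 1 - fr A n L) \<longlonglongrightarrow> 0 \<longleftrightarrow>
     zero_automaton A (min_states A L) min_delta \<and> (\<exists>z\<in>min_states A L. is_sink A min_delta z \<and> [] \<in> z)"
  proof (rule d1.main_iff[OF assms(3) fin sinkA])
    show "1 - fr A n {w. set w \<subseteq> A} = 0" for n using fr_all[OF fA neA] by simp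
    show "\<exists>v. set v \<subseteq> A \<and> 1 - fr A 0 (lquot v Y) = 1"
      if Ys: "Y \<subseteq> {w. set w \<subseteq> A}" "Y \<noteq> {w. set w \<subseteq> A}" for Y
    proof -
      obtain v where "set v \<subseteq> A" "v \<notin> Y" using Ys by auto
      then show ?thesis by (intro exI[of _ v]) (simp add: fr_0 lquot_def)
    qed
    show "[] \<in> z \<longleftrightarrow> z = {w. set w \<subseteq> A}"
      if zs: "z \<subseteq> {w. set w \<subseteq> A}" and zk: "is_sink A min_delta z" for z
    proof
      assume e: "[] \<in> z"
      have "v \<in> z" if vA: "set v \<subseteq> A" for v
      proof -
        have "[] \<in> lquot v z" using e sink_words[OF zk vA] by simp
        then show ?thesis by (simp add: lquot_def)
      qed
      then show "z = {w. set w \<subseteq> A}" using zs by blast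
    qed simp
  qed (use sinkA in auto)
  have r0: "(\<lambda>n. fr A n L) \<longlonglongrightarrow> 0 \<longleftrightarrow>
     zero_automaton A (min_states A L) min_delta \<and> (\<exists>z\<in>min_states A L. is_sink A min_delta z \<and> [] \<notin> z)"
  proof (rule d0.main_iff[OF assms(3) fin])
    show "lquot [a] {} = {}" for a :: 'a by (simp add: lquot_def)
    show "fr A n {} = 0" for n by (simp add: fr_empty)
    show "\<exists>v. set v \<subseteq> A \<and> fr A 0 (lquot v Y) = 1"
      if Ys: "Y \<subseteq> {w. set w \<subseteq> A}" "Y \<noteq> {}" for Y
    proof -
      obtain v where "v \<in> Y" using Ys by auto
      then show ?thesis using Ys by (intro exI[of _ v]) (auto simp: fr_0 lquot_def)
    qed
    show "[] \<notin> z \<longleftrightarrow> z = {}"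
      if zs: "z \<subseteq> {w. set w \<subseteq> A}" and zk: "is_sink A min_delta z" for z
    proof
      assume e: "[] \<notin> z"
      have "v \<notin> z" if vA: "set v \<subseteq> A" for v
      proof
        assume "v \<in> z"
        then have "[] \<in> lquot v z" by (simp add: lquot_def)
        then show False using e sink_words[OF zk vA] by simp
      qed
      then show "z = {}" using zs by blast
    qed simp
  qed
  have l1: "has_density A L 1 \<longleftrightarrow> (\<lambda>n. 1 - fr A n L) \<longlonglongrightarrow> 0"
    unfolding hd
  proof
    assume "(\<lambda>n. fr A n L) \<longlonglongrightarrow> 1"
    from tendsto_diff[OF tendsto_const[of "1::real"] this] show "(\<lambda>n. 1 - fr A n L) \<longlonglongrightarrow> 0" by simp
  next
    assume "(\<lambda>n. 1 - fr A n L) \<longlonglongrightarrow> 0"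
    from tendsto_diff[OF tendsto_const[of "1::real"] this] show "(\<lambda>n. fr A n L) \<longlonglongrightarrow> 1" by simp
  qed
  have ex_eq: "(\<exists>z\<in>min_states A L. is_sink A min_delta z \<and> z \<in> min_final A L) \<longleftrightarrow>
               (\<exists>z\<in>min_states A L. is_sink A min_delta z \<and> [] \<in> z)"
              "(\<exists>z\<in>min_states A L. is_sink A min_delta z \<and> z \<notin> min_final A L) \<longleftrightarrow>
               (\<exists>z\<in>min_states A L. is_sink A min_delta z \<and> [] \<notin> z)"
    using fin_iff by (meson bex_cong)+
  show ?thesis unfolding l1 r1 hd[of 0, symmetric] ex_eq r0[symmetric] by (rule conjI refl)+
qed
end
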